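(* Let $(S,\|\cdot\|)$ be a complete $RN$ module over $K$ with base $(\Omega,\mathcal F,P)$, let $\{T(t):t\geq 0\}$ be an a.s. bounded $C_{0}$--semigroup on $S$ with infinitesimal generator $(A,D(A))$. Given $x\in D(A)$, define $f:[0,+\infty)\to S$ by $f(t)=T(t)x$. Then for every $x\in D(A)$ and every real $r>0$, $f$ is $L^{0}$-Lipschitz on $[0,r]$, i.e. there exists $\xi\in L^0_+(\mathcal F)$ with $\|f(t_1)-f(t_2)\|\le \xi|t_1-t_2|$ for all $t_1,t_2\in[0,r]$.
   Context: $(\Omega,\mathcal F,P)$ is a probability space; $L^{0}(\mathcal F,K)$ ($K=R$ or $C$) is the algebra of equivalence classes of $K$-valued $\mathcal F$-measurable random variables, ordered a.s.; $L^{0}_{+}(\mathcal F)=\{\xi\in L^0(\mathcal F,R):\xi\ge 0\}$. Suprema are taken in the complete lattice of extended random variables. An $RN$ module over $K$ with base $(\Omega,\mathcal F,P)$ is a left $L^0(\mathcal F,K)$-module $S$ with a map $\|\cdot\|:S\to L^0_+(\mathcal F)$ such that $\|\xi x\|=|\xi|\|x\|$, $\|x+y\|\le\|x\|+\|y\|$, and $\|x\|=0$ implies $x=0$; it carries the $(\varepsilon,\lambda)$-topology, in which $x_n\to x$ iff $\|x_n-x\|\to0$ in probability; completeness refers to this topology. $B(S)$ is the set of continuous module homomorphisms $S\to S$ (equivalently $\|Tx\|\le \xi\|x\|$ for some $\xi\in L^0_+(\mathcal F)$), with $\|T\|=\bigwedge\{\xi\in L^0_+(\mathcal F):\|Tx\|\le\xi\|x\|\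 \forall x\}$. A $C_0$--semigroup is $\{T(t):t\ge0\}\subset B(S)$ with $T(0)=I$, $T(s)T(t)=T(s+t)$, $\lim_{t\downarrow0}T(t)x=x$ for all $x$. It is a.s. bounded if there is a real $L>0$ with $\bigvee_{t\in[0,L]}\|T(t)\|\in L^0_+(\mathcal F)$. Its infinitesimal generator is $Ax=\lim_{t\downarrow0}\frac{T(t)x-x}{t}$ on $D(A)=\{x:\text{the limit exists}\}$. *)

theory Defs
  imports "HOL-Probability.Probability"
begin

text \<open>
L0(F,K) is represented by F-measurable functions Omega to K ('k); two
representatives equal a.e. denote the same class. The module S is the type 'a with
its additive group structure; sm is the L0-action (on representatives, and it must
not depend on the representative), nrm x is a representative of the L0-norm of x.
\<close>

definition RN_module ::
  "'w measure \<Rightarrow> (('w \<Rightarrow> 'k::real_normed_field) \<Rightarrow> 'a::ab_group_add \<Rightarrow> 'a) \<Rightarrow> ('a \<Rightarrow> 'w \<Rightarrow> real) \<Rightarrow> bool"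
  where
  "RN_module M sm nrm \<longleftrightarrow>
     prob_space M \<and>
     (\<forall>x. nrm x \<in> borel_measurable M \<and> (AE \<omega> in M. 0 \<le> nrm x \<omega>)) \<and>
     (\<forall>\<xi>\<in>borel_measurable M. \<forall>\<eta>\<in>borel_measurable M. \<forall>x y.
         sm (\<lambda>\<omega>. \<xi> \<omega> * \<eta> \<omega>) x = sm \<xi> (sm \<eta> x) \<and>
         sm (\<lambda>\<omega>. \<xi> \<omega> + \<eta> \<omega>) x = sm \<xi> x + sm \<eta> x \<and>
         sm \<xi> (x + y) = sm \<xi> x + sm \<xi> y) \<and>
     (\<forall>x. sm (\<lambda>\<omega>. 1) x = x) \<and>
     (\<forall>\<xi>\<in>borel_measurable M. \<forall>\<eta>\<in>borel_measurable M. \<forall>x.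
         (AE \<omega> in M. \<xi> \<omega> = \<eta> \<omega>) \<longrightarrow> sm \<xi> x = sm \<eta> x) \<and>
     (\<forall>\<xi>\<in>borel_measurable M. \<forall>x. AE \<omega> in M. nrm (sm \<xi> x) \<omega> = norm (\<xi> \<omega>) * nrm x \<omega>) \<and>
     (\<forall>x y. AE \<omega> in M. nrm (x + y) \<omega> \<le> nrm x \<omega> + nrm y \<omega>) \<and>
     (\<forall>x. (AE \<omega> in M. nrm x \<omega> = 0) \<longrightarrow> x = 0)"

text \<open>Convergence in the (epsilon,lambda)-topology along a filter: the norm of the
difference tends to 0 in probability.\<close>
definition tendsto_el ::
  "'w measure \<Rightarrow> ('a::ab_group_add \<Rightarrow> 'w \<Rightarrow> real) \<Rightarrow> ('i \<Rightarrow> 'a) \<Rightarrow> 'a \<Rightarrow> 'i filter \<Rightarrow> bool"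
  where
  "tendsto_el M nrm g y F \<longleftrightarrow>
     (\<forall>\<epsilon>>0. ((\<lambda>i. measure M {\<omega>\<in>space M. \<epsilon> \<le> nrm (g i - y) \<omega>}) \<longlongrightarrow> 0) F)"

text \<open>Cauchy sequences for the (epsilon,lambda)-uniformity and completeness
(the topology is metrizable, so sequential completeness is completeness).\<close>
definition cauchy_el :: "'w measure \<Rightarrow> ('a::ab_group_add \<Rightarrow> 'w \<Rightarrow> real) \<Rightarrow> (nat \<Rightarrow> 'a) \<Rightarrow> bool"
  where
  "cauchy_el M nrm X \<longleftrightarrow>
     (\<forall>\<epsilon>>0. \<forall>\<delta>>0. \<exists>N. \<forall>m\<ge>N. \<forall>n\<ge>N.
        measure M {\<omega>\<in>space M. \<epsilon> \<le> nrm (X m - X n) \<omega>} < \<delta>)"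

definition complete_el :: "'w measure \<Rightarrow> ('a::ab_group_add \<Rightarrow> 'w \<Rightarrow> real) \<Rightarrow> bool"
  where
  "complete_el M nrm \<longleftrightarrow>
     (\<forall>X. cauchy_el M nrm X \<longrightarrow> (\<exists>y. tendsto_el M nrm X y sequentially))"

definition bounded_op ::
  "'w measure \<Rightarrow> (('w \<Rightarrow> 'k::real_normed_field) \<Rightarrow> 'a::ab_group_add \<Rightarrow> 'a) \<Rightarrow> ('a \<Rightarrow> 'w \<Rightarrow> real) \<Rightarrow> ('a \<Rightarrow> 'a) \<Rightarrow> bool"
  where
  "bounded_op M sm nrm T \<longleftrightarrow>
     (\<forall>x y. T (x + y) = T x + T y) \<and>
     (\<forall>\<xi>\<in>borel_measurable M. \<forall>x. T (sm \<xi> x) = sm \<xi> (T x)) \<and>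
     (\<exists>\<xi>\<in>borel_measurable M. (AE \<omega> in M. 0 \<le> \<xi> \<omega>) \<and>
        (\<forall>x. AE \<omega> in M. nrm (T x) \<omega> \<le> \<xi> \<omega> * nrm x \<omega>))"

definition is_ess_inf :: "'w measure \<Rightarrow> ('w \<Rightarrow> real) set \<Rightarrow> ('w \<Rightarrow> real) \<Rightarrow> bool"
  where
  "is_ess_inf M F g \<longleftrightarrow>
     g \<in> borel_measurable M \<and>
     (\<forall>\<xi>\<in>F. AE \<omega> in M. g \<omega> \<le> \<xi> \<omega>) \<and>
     (\<forall>h\<in>borel_measurable M. (\<forall>\<xi>\<in>F. AE \<omega> in M. h \<omega> \<le> \<xi> \<omega>) \<longrightarrow> (AE \<omega> in M. h \<omega> \<le> g \<omega>))"

definition is_op_norm ::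
  "'w measure \<Rightarrow> ('a \<Rightarrow> 'w \<Rightarrow> real) \<Rightarrow> ('a \<Rightarrow> 'a) \<Rightarrow> ('w \<Rightarrow> real) \<Rightarrow> bool"
  where
  "is_op_norm M nrm T g \<longleftrightarrow>
     is_ess_inf M {\<xi>. \<xi> \<in> borel_measurable M \<and> (AE \<omega> in M. 0 \<le> \<xi> \<omega>) \<and>
                      (\<forall>x. AE \<omega> in M. nrm (T x) \<omega> \<le> \<xi> \<omega> * nrm x \<omega>)} g"

definition C0_semigroup ::
  "'w measure \<Rightarrow> (('w \<Rightarrow> 'k::real_normed_field) \<Rightarrow> 'a::ab_group_add \<Rightarrow> 'a) \<Rightarrow> ('a \<Rightarrow> 'w \<Rightarrow> real) \<Rightarrow> (real \<Rightarrow> 'a \<Rightarrow> 'a) \<Rightarrow> bool"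
  where
  "C0_semigroup M sm nrm T \<longleftrightarrow>
     (\<forall>t\<ge>0. bounded_op M sm nrm (T t)) \<and>
     T 0 = id \<and>
     (\<forall>s\<ge>0. \<forall>t\<ge>0. T s \<circ> T t = T (s + t)) \<and>
     (\<forall>x. tendsto_el M nrm (\<lambda>t. T t x) x (at_right 0))"

text \<open>a.s. bounded: for some real L > 0 the supremum of ||T(t)||, t in [0,L], is in
L0_+ (i.e. is bounded by some finite random variable eta).\<close>
definition as_bounded :: "'w measure \<Rightarrow> ('a \<Rightarrow> 'w \<Rightarrow> real) \<Rightarrow> (real \<Rightarrow> 'a \<Rightarrow> 'a) \<Rightarrow> bool"
  where
  "as_bounded M nrm T \<longleftrightarrow>
     (\<exists>L>0. \<exists>\<eta>\<in>borel_measurable M. \<forall>t\<in>{0..L}.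
        \<exists>g. is_op_norm M nrm (T t) g \<and> (AE \<omega> in M. g \<omega> \<le> \<eta> \<omega>))"

definition gen_domain ::
  "'w measure \<Rightarrow> (('w \<Rightarrow> 'k::real_normed_field) \<Rightarrow> 'a::ab_group_add \<Rightarrow> 'a) \<Rightarrow> ('a \<Rightarrow> 'w \<Rightarrow> real) \<Rightarrow> (real \<Rightarrow> 'a \<Rightarrow> 'a) \<Rightarrow> 'a set"
  where
  "gen_domain M sm nrm T =
     {x. \<exists>y. tendsto_el M nrm (\<lambda>t. sm (\<lambda>\<omega>. of_real (1 / t)) (T t x - x)) y (at_right 0)}"

end

theory Submission
  imports Defs
begin


definition opbound :: "'w measure \<Rightarrow> ('a \<Rightarrow> 'w \<Rightarrow> real) \<Rightarrow> ('a \<Rightarrow> 'a) \<Rightarrow> ('w \<Rightarrow> real) \<Rightarrow> bool"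
  where "opbound M nrm A z \<longleftrightarrow> (\<forall>x. AE \<omega> in M. nrm (A x) \<omega> \<le> z \<omega> * nrm x \<omega>)"

lemma conv0:
  fixes V :: "'w \<Rightarrow> real" and W :: "nat \<Rightarrow> 'w \<Rightarrow> real"
  assumes P: "prob_space M" and V: "V \<in> borel_measurable M"
    and W: "\<And>n. W n \<in> borel_measurable M"
    and le: "\<And>n. AE \<omega> in M. V \<omega> \<le> W n \<omega>"
    and lim: "\<And>\<epsilon>. \<epsilon> > 0 \<Longrightarrow> (\<lambda>n. measure M {\<omega>\<in>space M. \<epsilon> \<le> W n \<omega>}) \<longlonglongrightarrow> 0"
  shows "AE \<omega> in M. V \<omega> \<le> 0"
proof -
  interpret prob_space M by (rule P)
  have z: "AE \<omega> in M. V \<omega> < \<epsilon>" if e: "\<epsilon> > 0" for \<epsilon> :: real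
  proof -
    have "measure M {\<omega>\<in>space M. \<epsilon> \<le> V \<omega>} \<le> measure M {\<omega>\<in>space M. \<epsilon> \<le> W n \<omega>}" for n
    proof (rule finite_measure_mono_AE)
      show "AE x in M. x \<in> {\<omega> \<in> space M. \<epsilon> \<le> V \<omega>} \<longrightarrow> x \<in> {\<omega> \<in> space M. \<epsilon> \<le> W n \<omega>}"
        using le[of n] by eventually_elim auto
      show "{\<omega> \<in> space M. \<epsilon> \<le> W n \<omega>} \<in> sets M" using W[of n] by measurable
    qed
    hence "measure M {\<omega>\<in>space M. \<epsilon> \<le> V \<omega>} \<le> 0"
      by (intro LIMSEQ_le_const[OF lim[OF e]]) auto
    hence m0: "measure M {\<omega>\<in>space M. \<epsilon> \<le> V \<omega>} = 0" by (simp add: measure_le_0_iff)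
    have s: "{\<omega>\<in>space M. \<epsilon> \<le> V \<omega>} \<in> sets M" using V by measurable
    show ?thesis
      by (subst AE_iff_measurable[OF s]) (auto simp: emeasure_eq_measure m0)
  qed
  have "AE \<omega> in M. \<forall>m. V \<omega> < 1 / real (Suc m)"
    using z by (subst AE_all_countable) auto
  then show ?thesis
  proof eventually_elim
    case (elim \<omega>)
    show ?case
    proof (rule ccontr)
      assume "\<not> V \<omega> \<le> 0"
      then obtain m where "1 / real (Suc m) < V \<omega>"
        by (metis reals_Archimedean inverse_eq_divide not_le)
      with elim show False by (meson less_asym)
    qed
  qed
qed



locale rnm =
  fixes M :: "'w measure"
    and sm :: "('w \<Rightarrow> 'k::real_normed_field) \<Rightarrow> 'a::ab_group_add \<Rightarrow> 'a"
    and nrm :: "'a \<Rightarrow> 'w \<Rightarrow> real"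
  assumes RN: "RN_module M sm nrm"
begin

lemmas RNu = RN[unfolded RN_module_def]
lemma prob: "prob_space M" using RNu by (elim conjE)
lemma nrm_meas[measurable]: "nrm x \<in> borel_measurable M"
  using RNu[THEN conjunct2, THEN conjunct1] by simp
lemma nrm_nn: "AE \<omega> in M. 0 \<le> nrm x \<omega>"
  using RNu[THEN conjunct2, THEN conjunct1] by simp
lemma tri: "AE \<omega> in M. nrm (x + y) \<omega> \<le> nrm x \<omega> + nrm y \<omega>"
  using RNu[THEN conjunct2, THEN conjunct2, THEN conjunct2, THEN conjunct2, THEN conjunct2, THEN conjunct2, THEN conjunct1] by simp
lemma nrm_sm: "\<xi> \<in> borel_measurable M \<Longrightarrow> AE \<omega> in M. nrm (sm \<xi> x) \<omega> = norm (\<xi> \<omega>) * nrm x \<omega>"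
  using RNu[THEN conjunct2, THEN conjunct2, THEN conjunct2, THEN conjunct2, THEN conjunct2, THEN conjunct1] by simp
lemma sm_add: "\<xi> \<in> borel_measurable M \<Longrightarrow> \<eta> \<in> borel_measurable M \<Longrightarrow> sm (\<lambda>\<omega>. \<xi> \<omega> + \<eta> \<omega>) x = sm \<xi> x + sm \<eta> x"
  using RNu[THEN conjunct2, THEN conjunct2, THEN conjunct1] by simp
lemma sm_one: "sm (\<lambda>\<omega>. 1) x = x"
  using RNu[THEN conjunct2, THEN conjunct2, THEN conjunct2, THEN conjunct1] by simp

lemma sm_zero: "sm (\<lambda>\<omega>. 0) z = 0"
proof -
  have "sm (\<lambda>\<omega>. 0 + 0) z = sm (\<lambda>\<omega>. 0) z + sm (\<lambda>\<omega>. 0) z"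
    by (rule sm_add) auto
  then show ?thesis by simp
qed

lemma sm_neg: "sm (\<lambda>\<omega>. - 1) z = - z"
proof -
  have "sm (\<lambda>\<omega>. 1 + - 1) z = sm (\<lambda>\<omega>. 1) z + sm (\<lambda>\<omega>. -1) z"
    by (rule sm_add) auto
  then have "0 = z + sm (\<lambda>\<omega>. -1) z" by (simp add: sm_zero sm_one)
  then show ?thesis by (metis add.commute add_implies_diff diff_0)
qed

lemma nrm_zero: "AE \<omega> in M. nrm 0 \<omega> = 0"
  using nrm_sm[of "\<lambda>\<omega>. 0" 0] by (simp add: sm_zero)

lemma nrm_uminus: "AE \<omega> in M. nrm (- z) \<omega> = nrm z \<omega>"
  using nrm_sm[of "\<lambda>\<omega>. - 1" z] by (simp add: sm_neg)

lemma nrm_scale: "AE \<omega> in M. nrm (sm (\<lambda>\<omega>. of_real c) z) \<omega> = \<bar>c\<bar> * nrm z \<omega>"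
  using nrm_sm[of "\<lambda>\<omega>. of_real c" z] by simp

lemma nrm_sum: "AE \<omega> in M. nrm (\<Sum>k<(n::nat). f k) \<omega> \<le> (\<Sum>k<n. nrm (f k) \<omega>)"
proof (induction n)
  case 0
  then show ?case using nrm_zero by eventually_elim simp
next
  case (Suc n)
  show ?case using Suc tri[of "\<Sum>k<n. f k" "f n"]
    by eventually_elim (simp add: add.commute)
qed

lemma opnorm_bound:
  assumes B: "bounded_op M sm nrm A" and G: "is_op_norm M nrm A g"
  shows "opbound M nrm A g"
  unfolding opbound_def
proof
  fix x
  define F where "F = {\<xi>. \<xi> \<in> borel_measurable M \<and> (AE \<omega> in M. 0 \<le> \<xi> \<omega>) \<and>
                      (\<forall>x. AE \<omega> in M. nrm (A x) \<omega> \<le> \<xi> \<omega> * nrm x \<omega>)}"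
  have ess: "is_ess_inf M F g" using G unfolding is_op_norm_def F_def by simp
  obtain \<xi>0 where "\<xi>0 \<in> borel_measurable M" "AE \<omega> in M. 0 \<le> \<xi>0 \<omega>"
      "\<forall>x. AE \<omega> in M. nrm (A x) \<omega> \<le> \<xi>0 \<omega> * nrm x \<omega>"
    using B[unfolded bounded_op_def, THEN conjunct2, THEN conjunct2] by (elim bexE conjE) 
  then have x0: "\<xi>0 \<in> F" unfolding F_def by simp
  define h where "h = (\<lambda>\<omega>. if 0 < nrm x \<omega> then nrm (A x) \<omega> / nrm x \<omega> else 0)"
  have hm: "h \<in> borel_measurable M" unfolding h_def by measurable
  have "\<forall>\<xi>\<in>F. AE \<omega> in M. h \<omega> \<le> \<xi> \<omega>"
  proof
    fix \<xi> assume "\<xi> \<in> F"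
    then have a: "AE \<omega> in M. 0 \<le> \<xi> \<omega>" and b: "AE \<omega> in M. nrm (A x) \<omega> \<le> \<xi> \<omega> * nrm x \<omega>"
      unfolding F_def by auto
    show "AE \<omega> in M. h \<omega> \<le> \<xi> \<omega>" using a b
      by eventually_elim (auto simp: h_def divide_le_eq)
  qed
  then have hg: "AE \<omega> in M. h \<omega> \<le> g \<omega>" using ess hm unfolding is_ess_inf_def by blast
  have b0: "AE \<omega> in M. nrm (A x) \<omega> \<le> \<xi>0 \<omega> * nrm x \<omega>" using x0 unfolding F_def by auto
  show "AE \<omega> in M. nrm (A x) \<omega> \<le> g \<omega> * nrm x \<omega>" using hg b0 nrm_nn[of x]
  proof eventually_elim
    case (elim \<omega>)
    show ?case
    proof (cases "0 < nrm x \<omega>")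
      case True
      then show ?thesis using elim by (simp add: h_def divide_le_eq)
    next
      case False
      then have "nrm x \<omega> = 0" using elim by simp
      then show ?thesis using elim by simp
    qed
  qed
qed

lemma opbound_mono:
  assumes "opbound M nrm A a" "AE \<omega> in M. a \<omega> \<le> b \<omega>"
  shows "opbound M nrm A b"
  unfolding opbound_def
proof
  fix x
  show "AE \<omega> in M. nrm (A x) \<omega> \<le> b \<omega> * nrm x \<omega>"
    using assms(2) nrm_nn[of x] assms(1)[unfolded opbound_def, rule_format, of x]
  proof eventually_elim
    case (elim \<omega>)
    have "a \<omega> * nrm x \<omega> \<le> b \<omega> * nrm x \<omega>" using elim by (intro mult_right_mono) auto
    then show ?case using elim by linarith
  qed
qed

lemma opbound_comp:
  assumes "opbound M nrm A a" "opbound M nrm B b" "AE \<omega> in M. 0 \<le> a \<omega>"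
  shows "opbound M nrm (\<lambda>z. A (B z)) (\<lambda>\<omega>. a \<omega> * b \<omega>)"
  unfolding opbound_def
proof
  fix x
  show "AE \<omega> in M. nrm (A (B x)) \<omega> \<le> a \<omega> * b \<omega> * nrm x \<omega>"
    using assms(3) assms(1)[unfolded opbound_def, rule_format, of "B x"]
      assms(2)[unfolded opbound_def, rule_format, of x]
  proof eventually_elim
    case (elim \<omega>)
    have "a \<omega> * nrm (B x) \<omega> \<le> a \<omega> * (b \<omega> * nrm x \<omega>)" using elim by (intro mult_left_mono) auto
    then show ?case using elim by (simp add: mult.assoc)
  qed
qed

lemma bop_diff:
  assumes "bounded_op M sm nrm A"
  shows "A (a - b) = A a - A b"
proof -
  have "A (a - b + b) = A (a - b) + A b" using assms unfolding bounded_op_def by blast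
  then show ?thesis by (simp add: eq_diff_eq)
qed

end



theorem lemma3p7:
  fixes M :: "'w measure"
    and sm :: "('w \<Rightarrow> 'k::real_normed_field) \<Rightarrow> 'a::ab_group_add \<Rightarrow> 'a"
    and nrm :: "'a \<Rightarrow> 'w \<Rightarrow> real"
    and T :: "real \<Rightarrow> 'a \<Rightarrow> 'a"
  assumes "RN_module M sm nrm"
    and "complete_el M nrm"
    and "C0_semigroup M sm nrm T"
    and "as_bounded M nrm T"
  shows "\<forall>x\<in>gen_domain M sm nrm T. \<forall>r>(0::real).
           \<exists>\<xi>\<in>borel_measurable M. (AE \<omega> in M. 0 \<le> \<xi> \<omega>) \<and>
             (\<forall>t1\<in>{0..r}. \<forall>t2\<in>{0..r}.
                AE \<omega> in M. nrm (T t1 x - T t2 x) \<omega> \<le> \<xi> \<omega> * \<bar>t1 - t2\<bar>)"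
proof (intro ballI allI impI)
  fix x and r :: real
  assume xD: "x \<in> gen_domain M sm nrm T" and r: "0 < r"
  interpret rnm M sm nrm by (rule rnm.intro) (rule assms(1))
  have P: "prob_space M" by (rule prob)
  note C = assms(3)[unfolded C0_semigroup_def]
  have bop: "bounded_op M sm nrm (T t)" if "0 \<le> t" for t
    using C[THEN conjunct1] that by simp
  have T0: "T 0 = id" using C[THEN conjunct2, THEN conjunct1] .
  have Tadd: "T s (T t z) = T (s + t) z" if "0 \<le> s" "0 \<le> t" for s t z
  proof -
    have "T s \<circ> T t = T (s + t)" using C[THEN conjunct2, THEN conjunct2, THEN conjunct1] that by simp
    then show ?thesis by (metis comp_apply)
  qed
  define D where "D = (\<lambda>t. sm (\<lambda>\<omega>. (of_real (1 / t) :: 'k)) (T t x - x))"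
  have "\<exists>y. tendsto_el M nrm D y (at_right 0)"
    using xD unfolding gen_domain_def D_def by simp
  then obtain y where Dy: "tendsto_el M nrm D y (at_right 0)" by (elim exE)
  have ab: "\<exists>L>0. \<exists>\<eta>\<in>borel_measurable M. \<forall>t\<in>{0..L}.
        \<exists>g. is_op_norm M nrm (T t) g \<and> (AE \<omega> in M. g \<omega> \<le> \<eta> \<omega>)"
    using assms(4) unfolding as_bounded_def .
  then obtain L where L: "L > 0" and "\<exists>\<eta>\<in>borel_measurable M. \<forall>t\<in>{0..L}.
        \<exists>g. is_op_norm M nrm (T t) g \<and> (AE \<omega> in M. g \<omega> \<le> \<eta> \<omega>)" by (elim exE conjE) 
  then obtain \<eta> where \<eta>m: "\<eta> \<in> borel_measurable M"
    and \<eta>b: "\<forall>t\<in>{0..L}. \<exists>g. is_op_norm M nrm (T t) g \<and> (AE \<omega> in M. g \<omega> \<le> \<eta> \<omega>)"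
    by (elim bexE)
  define \<eta>1 where "\<eta>1 = (\<lambda>\<omega>. max 1 (\<eta> \<omega>))"
  have \<eta>1m[measurable]: "\<eta>1 \<in> borel_measurable M" unfolding \<eta>1_def using \<eta>m by measurable
  have \<eta>1ge: "1 \<le> \<eta>1 \<omega>" for \<omega> unfolding \<eta>1_def by simp
  have bL: "opbound M nrm (T t) \<eta>1" if "t \<in> {0..L}" for t
  proof -
    have tt: "0 \<le> t" using that by simp
    have ex: "\<exists>g. is_op_norm M nrm (T t) g \<and> (AE \<omega> in M. g \<omega> \<le> \<eta> \<omega>)"
      using bspec[OF \<eta>b that] .
    then obtain g where g1: "is_op_norm M nrm (T t) g" and g2: "AE \<omega> in M. g \<omega> \<le> \<eta> \<omega>"
      by (elim exE conjE)
    have og: "opbound M nrm (T t) g" by (rule opnorm_bound[OF bop[OF tt] g1])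
    have "AE \<omega> in M. g \<omega> \<le> \<eta>1 \<omega>" using g2 by eventually_elim (simp add: \<eta>1_def)
    then show ?thesis by (rule opbound_mono[OF og])
  qed
  have bn: "\<forall>s\<in>{0..real (Suc n) * L}. opbound M nrm (T s) (\<lambda>\<omega>. \<eta>1 \<omega> ^ Suc n)" for n
  proof (induction n)
    case 0 then show ?case using bL by simp
  next
    case (Suc n)
    show ?case
    proof
      fix s assume s: "s \<in> {0..real (Suc (Suc n)) * L}"
      show "opbound M nrm (T s) (\<lambda>\<omega>. \<eta>1 \<omega> ^ Suc (Suc n))"
      proof (cases "s \<le> L")
        case True
        then have "opbound M nrm (T s) \<eta>1" using s by (intro bL) auto
        then show ?thesis
        proof (rule opbound_mono, intro AE_I2)
          fix \<omega>
          show "\<eta>1 \<omega> \<le> \<eta>1 \<omega> ^ Suc (Suc n)"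
            using power_increasing[of 1 "Suc (Suc n)" "\<eta>1 \<omega>"] \<eta>1ge[of \<omega>] by simp
        qed
      next
        case False
        have s': "s - L \<in> {0..real (Suc n) * L}" using s False by (auto simp: algebra_simps)
        have a: "opbound M nrm (T L) \<eta>1" using L by (intro bL) auto
        have b: "opbound M nrm (T (s-L)) (\<lambda>\<omega>. \<eta>1 \<omega> ^ Suc n)" using Suc s' by blast
        have c: "opbound M nrm (\<lambda>z. T L (T (s - L) z)) (\<lambda>\<omega>. \<eta>1 \<omega> * \<eta>1 \<omega> ^ Suc n)"
          by (rule opbound_comp[OF a b]) (intro AE_I2, simp add: \<eta>1_def)
        have "(\<lambda>z. T L (T (s - L) z)) = T s" using Tadd[of L "s-L"] L False by auto
        then show ?thesis using c by simp
      qed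
    qed
  qed
  obtain N where N: "r \<le> real (Suc N) * L"
  proof
    have "r / L \<le> real (Suc (nat \<lceil>r / L\<rceil>))" by linarith
    then show "r \<le> real (Suc (nat \<lceil>r / L\<rceil>)) * L" using L by (simp add: divide_le_eq)
  qed
  define E where "E = (\<lambda>\<omega>. \<eta>1 \<omega> ^ Suc N)"
  have Em[measurable]: "E \<in> borel_measurable M" unfolding E_def by measurable
  have Ege: "1 \<le> E \<omega>" for \<omega> unfolding E_def by (rule one_le_power[OF \<eta>1ge])
  have bE: "opbound M nrm (T s) E" if "s \<in> {0..r}" for s
    using bn[of N] that N unfolding E_def by auto
  have key: "AE \<omega> in M. nrm (T h x - x) \<omega> \<le> E \<omega> * h * nrm y \<omega>" if h: "h \<in> {0..r}" for h
  proof (cases "h = 0")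
    case True
    show ?thesis using nrm_zero by eventually_elim (simp add: T0 True)
  next
    case False
    then have hp: "0 < h" using h by auto
    define q where "q = (\<lambda>n::nat. h / real (Suc n))"
    have qpos: "0 < q n" for n using hp unfolding q_def by simp
    have qle: "real k * q n \<le> h" if "k \<le> Suc n" for k n
    proof -
      have "real k * q n = h * (real k / real (Suc n))" unfolding q_def by simp
      also have "\<dots> \<le> h * 1" using that hp by (intro mult_left_mono) auto
      finally show ?thesis by simp
    qed
    have tele: "T h x - x = (\<Sum>k<Suc n. T (real k * q n) (T (q n) x - x))" for n
    proof -
      have st: "T (real k * q n) (T (q n) x - x) = T (real (Suc k) * q n) x - T (real k * q n) x" for k
      proof -
        have "T (real k * q n) (T (q n) x - x) = T (real k * q n) (T (q n) x) - T (real k * q n) x"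
          by (rule bop_diff[OF bop]) (use qpos[of n] in simp)
        also have "T (real k * q n) (T (q n) x) = T (real k * q n + q n) x"
          using Tadd qpos[of n] by (simp add: less_imp_le)
        also have "real k * q n + q n = real (Suc k) * q n" by (simp add: algebra_simps)
        finally show ?thesis .
      qed
      have "(\<Sum>k<Suc n. T (real k * q n) (T (q n) x - x)) = T (real (Suc n) * q n) x - T (real 0 * q n) x"
        unfolding st by (rule sum_lessThan_telescope)
      moreover have "real (Suc n) * q n = h" unfolding q_def by simp
      ultimately show ?thesis using T0 by simp
    qed
    have bnd: "AE \<omega> in M. nrm (T h x - x) \<omega> \<le> E \<omega> * h * (nrm (D (q n) - y) \<omega> + nrm y \<omega>)" for n
    proof -
      have s1: "AE \<omega> in M. nrm (T h x - x) \<omega> \<le> (\<Sum>k<Suc n. nrm (T (real k * q n) (T (q n) x - x)) \<omega>)"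
        using nrm_sum[of "\<lambda>k. T (real k * q n) (T (q n) x - x)" "Suc n"] tele[of n] by simp
      have s2: "AE \<omega> in M. \<forall>k\<in>{..<Suc n}. nrm (T (real k * q n) (T (q n) x - x)) \<omega> \<le> E \<omega> * nrm (T (q n) x - x) \<omega>"
      proof (subst AE_finite_all, simp, intro ballI)
        fix k assume "k \<in> {..<Suc n}"
        then have "real k * q n \<in> {0..r}" using qle[of k n] qpos[of n] h by auto
        then show "AE \<omega> in M. nrm (T (real k * q n) (T (q n) x - x)) \<omega> \<le> E \<omega> * nrm (T (q n) x - x) \<omega>"
          using bE unfolding opbound_def by blast
      qed
      have s3: "AE \<omega> in M. nrm (D (q n)) \<omega> = \<bar>1 / q n\<bar> * nrm (T (q n) x - x) \<omega>"
        unfolding D_def by (rule nrm_scale)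
      have s4: "AE \<omega> in M. nrm (D (q n)) \<omega> \<le> nrm (D (q n) - y) \<omega> + nrm y \<omega>"
        using tri[of "D (q n) - y" y] by simp
      from s1 s2 s3 s4 show ?thesis
      proof eventually_elim
        case (elim \<omega>)
        have "nrm (T h x - x) \<omega> \<le> (\<Sum>k<Suc n. E \<omega> * nrm (T (q n) x - x) \<omega>)"
          using elim(1,2) sum_mono[of "{..<Suc n}"] by (meson order_trans)
        also have "\<dots> = E \<omega> * (real (Suc n) * nrm (T (q n) x - x) \<omega>)" by simp
        also have "real (Suc n) * nrm (T (q n) x - x) \<omega> = h * nrm (D (q n)) \<omega>"
          using elim(3) qpos[of n] hp unfolding q_def by (simp add: field_simps)
        also have "E \<omega> * (h * nrm (D (q n)) \<omega>) \<le> E \<omega> * (h * (nrm (D (q n) - y) \<omega> + nrm y \<omega>))"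
          using elim(4) Ege[of \<omega>] hp by (intro mult_left_mono) auto
        finally show ?case by (simp add: mult.assoc)
      qed
    qed
    define V where "V = (\<lambda>\<omega>. nrm (T h x - x) \<omega> / (E \<omega> * h) - nrm y \<omega>)"
    have "AE \<omega> in M. V \<omega> \<le> 0"
    proof (rule conv0[OF P, of V "\<lambda>n. nrm (D (q n) - y)"])
      show "V \<in> borel_measurable M" unfolding V_def by measurable
      show "nrm (D (q n) - y) \<in> borel_measurable M" for n by measurable
      show "AE \<omega> in M. V \<omega> \<le> nrm (D (q n) - y) \<omega>" for n
        using bnd[of n]
      proof eventually_elim
        case (elim \<omega>)
        have "0 < E \<omega> * h" using Ege[of \<omega>] hp by simp
        then have "nrm (T h x - x) \<omega> / (E \<omega> * h) \<le> nrm (D (q n) - y) \<omega> + nrm y \<omega>"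
          using elim by (simp add: pos_divide_le_eq mult.assoc mult.left_commute mult.commute)
        then show ?case unfolding V_def by simp
      qed
      fix \<epsilon> :: real assume e: "0 < \<epsilon>"
      have l1: "((\<lambda>t. measure M {\<omega>\<in>space M. \<epsilon> \<le> nrm (D t - y) \<omega>}) \<longlongrightarrow> 0) (at_right 0)"
        using Dy e unfolding tendsto_el_def by blast
      have l2: "filterlim q (at_right 0) sequentially"
        unfolding filterlim_at
      proof
        show "\<forall>\<^sub>F n in sequentially. q n \<in> {0<..} \<and> q n \<noteq> 0" using qpos by (simp add: less_imp_neq[symmetric])
        have "(\<lambda>n. h / real (Suc n)) \<longlonglongrightarrow> 0"
          using LIMSEQ_Suc[OF lim_const_over_n[of h]] by simp
        then show "q \<longlonglongrightarrow> 0" unfolding q_def .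
      qed
      show "(\<lambda>n. measure M {\<omega>\<in>space M. \<epsilon> \<le> nrm (D (q n) - y) \<omega>}) \<longlonglongrightarrow> 0"
        using filterlim_compose[OF l1 l2] .
    qed
    then show ?thesis using nrm_nn[of y]
    proof eventually_elim
      case (elim \<omega>)
      have p: "0 < E \<omega> * h" using Ege[of \<omega>] hp by simp
      have "nrm (T h x - x) \<omega> / (E \<omega> * h) \<le> nrm y \<omega>" using elim unfolding V_def by simp
      then show ?case using p by (simp add: pos_divide_le_eq mult.commute mult.left_commute)
    qed
  qed
  define \<xi> where "\<xi> = (\<lambda>\<omega>. E \<omega> * E \<omega> * nrm y \<omega>)"
  have one: "AE \<omega> in M. nrm (T a x - T b x) \<omega> \<le> \<xi> \<omega> * (a - b)"
    if ab: "b \<le> a" "a \<in> {0..r}" "b \<in> {0..r}" for a b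
  proof -
    have "T b (T (a - b) x - x) = T b (T (a - b) x) - T b x"
      by (rule bop_diff[OF bop]) (use ab in simp)
    also have "T b (T (a - b) x) = T a x" using Tadd[of b "a - b" x] ab by simp
    finally have eq: "T a x - T b x = T b (T (a - b) x - x)" by simp
    have h1: "AE \<omega> in M. nrm (T b (T (a - b) x - x)) \<omega> \<le> E \<omega> * nrm (T (a - b) x - x) \<omega>"
      using bE[of b] ab unfolding opbound_def by blast
    have h2: "AE \<omega> in M. nrm (T (a - b) x - x) \<omega> \<le> E \<omega> * (a - b) * nrm y \<omega>"
      using key[of "a - b"] ab by auto
    show ?thesis using h1 h2 unfolding eq
    proof eventually_elim
      case (elim \<omega>)
      have "E \<omega> * nrm (T (a - b) x - x) \<omega> \<le> E \<omega> * (E \<omega> * (a - b) * nrm y \<omega>)"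
        using elim(2) Ege[of \<omega>] by (intro mult_left_mono) auto
      moreover have "E \<omega> * (E \<omega> * (a - b) * nrm y \<omega>) = \<xi> \<omega> * (a - b)"
        unfolding \<xi>_def by (simp add: mult_ac)
      ultimately show ?case using elim(1) by linarith
    qed
  qed
  show "\<exists>\<xi>\<in>borel_measurable M. (AE \<omega> in M. 0 \<le> \<xi> \<omega>) \<and>
             (\<forall>t1\<in>{0..r}. \<forall>t2\<in>{0..r}.
                AE \<omega> in M. nrm (T t1 x - T t2 x) \<omega> \<le> \<xi> \<omega> * \<bar>t1 - t2\<bar>)"
  proof (intro bexI conjI ballI)
    show "\<xi> \<in> borel_measurable M" unfolding \<xi>_def by measurable
    show "AE \<omega> in M. 0 \<le> \<xi> \<omega>" using nrm_nn[of y]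
      by eventually_elim (use Ege in \<open>simp add: \<xi>_def\<close>)
    fix t1 t2 assume t1: "t1 \<in> {0..r}" and t2: "t2 \<in> {0..r}"
    show "AE \<omega> in M. nrm (T t1 x - T t2 x) \<omega> \<le> \<xi> \<omega> * \<bar>t1 - t2\<bar>"
    proof (cases "t2 \<le> t1")
      case True
      then show ?thesis using one[OF True t1 t2] by simp
    next
      case False
      then have le: "t1 \<le> t2" by simp
      show ?thesis using one[OF le t2 t1] nrm_uminus[of "T t2 x - T t1 x"]
        by eventually_elim (use False in simp)
    qed
  qed
qed

end
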